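(* For every $M\in\mathbb{R}^{n\times n}$ with block structure $0=n_0<n_1<\dots<n_m=n$, $$\|\mathcal{U}_b(M)\|_{S_\infty}\le(\lceil\log_2(m)\rceil+1)\|M\|_{S_\infty}.$$
   Context: Block $(i,j)$, $0\le i,j\le m-1$, consists of rows $n_i+1..n_{i+1}$ and columns $n_j+1..n_{j+1}$. $\mathcal{U}_b(M)$ has blocks $\mathcal{U}_b(M)(i,j)=M(i,j)$ for $i\le j$ and $0$ for $i>j$. $\|\cdot\|_{S_\infty}$ is the spectral norm. *)

theory Defs
  imports "HOL-Analysis.Analysis"
begin

text \<open>Indices of the matrix are the elements of a finite linearly ordered type 'n;
  the position (0-based) of an index i is the number of indices strictly below it.
  So the rows/columns n_a+1..n_(a+1) (1-based) are the indices with position in [n_a, n_(a+1)).\<close>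

definition idx_pos :: "'n::{finite,linorder} \<Rightarrow> nat" where
  "idx_pos i = card {j. j < i}"

definition in_block :: "(nat \<Rightarrow> nat) \<Rightarrow> nat \<Rightarrow> 'n::{finite,linorder} \<Rightarrow> bool" where
  "in_block nb a i \<longleftrightarrow> nb a \<le> idx_pos i \<and> idx_pos i < nb (Suc a)"

definition block_structure :: "(nat \<Rightarrow> nat) \<Rightarrow> nat \<Rightarrow> nat \<Rightarrow> bool" where
  "block_structure nb m n \<longleftrightarrow> nb 0 = 0 \<and> (\<forall>a<m. nb a < nb (Suc a)) \<and> nb m = n"

definition block_upper :: "(nat \<Rightarrow> nat) \<Rightarrow> nat \<Rightarrow> real^('n::{finite,linorder})^('n::{finite,linorder}) \<Rightarrow> real^('n::{finite,linorder})^('n::{finite,linorder})" where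
  "block_upper nb m M = (\<chi> r c. if (\<exists>a b. a \<le> b \<and> b < m \<and> in_block nb a r \<and> in_block nb b c)
                                 then M $ r $ c else 0)"

definition spec_norm :: "real^'n^'m \<Rightarrow> real" where
  "spec_norm M = onorm (\<lambda>x. M *v x)"

end

theory Submission
  imports Defs
begin

definition proj :: "'n set \<Rightarrow> real^'n \<Rightarrow> real^'n" where
  "proj S x = (\<chi> i. if i \<in> S then x $ i else 0)"

definition restr :: "'m set \<Rightarrow> 'n set \<Rightarrow> real^'n^'m \<Rightarrow> real^'n^'m" where
  "restr R C A = (\<chi> r c. if r \<in> R \<and> c \<in> C then A $ r $ c else 0)"

lemma spec_bl: "bounded_linear (\<lambda>x. (A::real^'n^'m) *v x)"
  using matrix_vector_mul_bounded_linear[of A] by simp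

lemma spec_norm_nonneg: "0 \<le> spec_norm A"
  unfolding spec_norm_def by (rule onorm_pos_le[OF spec_bl])

lemma spec_norm_le: "norm (A *v x) \<le> spec_norm A * norm x"
  unfolding spec_norm_def by (rule onorm[OF spec_bl])

lemma spec_norm_bound: "0 \<le> b \<Longrightarrow> (\<And>x. norm (A *v x) \<le> b * norm x) \<Longrightarrow> spec_norm A \<le> b"
  unfolding spec_norm_def by (rule onorm_bound)

lemma spec_norm_add: "spec_norm (A + B) \<le> spec_norm A + spec_norm B"
  unfolding spec_norm_def matrix_vector_mult_add_rdistrib
  by (rule onorm_triangle[OF spec_bl spec_bl])

lemma norm_sq: "norm (x::real^'n)^2 = (\<Sum>i\<in>UNIV. (x$i)^2)"
proof -
  have "norm x ^2 = x \<bullet> x" by (rule power2_norm_eq_inner)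
  also have "\<dots> = (\<Sum>i\<in>UNIV. (x$i)^2)" by (simp add: inner_vec_def power2_eq_square)
  finally show ?thesis .
qed

lemma restr_mult: "restr R C A *v x = proj R (A *v proj C x)"
proof -
  have "(restr R C A *v x) $ r = proj R (A *v proj C x) $ r" for r
    by (cases "r \<in> R") (auto simp: matrix_vector_mult_def proj_def restr_def intro!: sum.cong)
  then show ?thesis by (simp add: vec_eq_iff)
qed

lemma proj_proj: "proj S (proj S x) = proj S x"
  by (simp add: proj_def vec_eq_iff)

lemma proj_norm_sq: "norm (proj S x)^2 = (\<Sum>i\<in>UNIV. (if i \<in> S then (x$i)^2 else 0))"
  unfolding norm_sq by (auto simp: proj_def intro!: sum.cong)

lemma proj_norm_le: "norm (proj S x) \<le> norm x"
proof (rule power2_le_imp_le)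
  show "norm (proj S x)^2 \<le> norm x ^2"
    unfolding proj_norm_sq[of S x] norm_sq[of x] by (rule sum_mono) simp
qed simp

lemma restr_le: "spec_norm (restr R C A) \<le> spec_norm A"
proof (rule spec_norm_bound[OF spec_norm_nonneg])
  fix x
  have "norm (restr R C A *v x) \<le> norm (A *v proj C x)"
    unfolding restr_mult by (rule proj_norm_le)
  also have "\<dots> \<le> spec_norm A * norm (proj C x)" by (rule spec_norm_le)
  also have "\<dots> \<le> spec_norm A * norm x"
    by (rule mult_left_mono[OF proj_norm_le spec_norm_nonneg])
  finally show "norm (restr R C A *v x) \<le> spec_norm A * norm x" .
qed

lemma pinch:
  assumes R: "R1 \<inter> R2 = {}" and C: "C1 \<inter> C2 = {}"
  shows "spec_norm (restr R1 C1 A + restr R2 C2 B)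
     \<le> max (spec_norm (restr R1 C1 A)) (spec_norm (restr R2 C2 B))"
proof (rule spec_norm_bound)
  let ?a = "spec_norm (restr R1 C1 A)" and ?b = "spec_norm (restr R2 C2 B)"
  let ?mx = "max ?a ?b"
  show "0 \<le> ?mx" using spec_norm_nonneg[of "restr R1 C1 A"] by simp
  fix x
  define y1 where "y1 = restr R1 C1 A *v x"
  define y2 where "y2 = restr R2 C2 B *v x"
  have y1': "y1 = restr R1 C1 A *v proj C1 x"
    unfolding y1_def restr_mult proj_proj ..
  have y2': "y2 = restr R2 C2 B *v proj C2 x"
    unfolding y2_def restr_mult proj_proj ..
  have orth: "y1 \<bullet> y2 = 0"
  proof -
    have "y1 $ i * y2 $ i = 0" for i
      using R unfolding y1_def y2_def restr_mult by (auto simp: proj_def)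
    then show ?thesis unfolding inner_vec_def by (simp only: inner_real_def) simp
  qed
  have e: "norm (y1 + y2)^2 = norm y1 ^2 + norm y2 ^2"
    using orth by (simp add: power2_norm_eq_inner inner_add inner_commute)
  have n1: "norm y1 \<le> ?mx * norm (proj C1 x)"
    unfolding y1' by (rule order_trans[OF spec_norm_le]) (simp add: mult_right_mono)
  have n2: "norm y2 \<le> ?mx * norm (proj C2 x)"
    unfolding y2' by (rule order_trans[OF spec_norm_le]) (simp add: mult_right_mono)
  have pp: "norm (proj C1 x)^2 + norm (proj C2 x)^2 \<le> norm x ^2"
    unfolding proj_norm_sq[of C1 x] proj_norm_sq[of C2 x] norm_sq[of x] sum.distrib[symmetric]
    by (rule sum_mono) (use C in auto)
  have "norm (y1 + y2)^2 \<le> (?mx * norm (proj C1 x))^2 + (?mx * norm (proj C2 x))^2"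
    unfolding e by (intro add_mono power_mono n1 n2) auto
  also have "\<dots> = ?mx^2 * (norm (proj C1 x)^2 + norm (proj C2 x)^2)"
    by (simp add: power_mult_distrib algebra_simps)
  also have "\<dots> \<le> ?mx^2 * norm x ^2"
    by (rule mult_left_mono[OF pp]) simp
  also have "\<dots> = (?mx * norm x)^2" by (simp add: power_mult_distrib)
  finally have "norm (y1 + y2)^2 \<le> (?mx * norm x)^2" .
  then have "norm (y1 + y2) \<le> ?mx * norm x"
    by (rule power2_le_imp_le) (use \<open>0 \<le> ?mx\<close> in simp)
  then show "norm ((restr R1 C1 A + restr R2 C2 B) *v x) \<le> ?mx * norm x"
    by (simp add: y1_def y2_def matrix_vector_mult_add_rdistrib)
qed

lemma nb_mono:
  assumes "block_structure nb m n" "a < a'" "a' \<le> m"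
  shows "nb (Suc a) \<le> nb a'"
  using assms(2,3)
proof (induction a')
  case 0 then show ?case by simp
next
  case (Suc a')
  have s: "nb a' < nb (Suc a')" using assms(1) Suc.prems unfolding block_structure_def by auto
  show ?case
  proof (cases "a = a'")
    case True then show ?thesis by simp
  next
    case False
    then have "nb (Suc a) \<le> nb a'" using Suc by auto
    then show ?thesis using s by simp
  qed
qed

lemma blk_uniq:
  assumes "block_structure nb m n" "a < m" "a' < m" "in_block nb a r" "in_block nb a' r"
  shows "a = a'"
proof (rule ccontr)
  assume "a \<noteq> a'"
  then consider "a < a'" | "a' < a" by linarith
  then show False
  proof cases
    case 1
    then have "nb (Suc a) \<le> nb a'" using nb_mono[OF assms(1)] assms by auto
    then show False using assms(4,5) unfolding in_block_def by auto
  next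
    case 2
    then have "nb (Suc a') \<le> nb a" using nb_mono[OF assms(1)] assms by auto
    then show False using assms(4,5) unfolding in_block_def by auto
  qed
qed

definition Nm :: "(nat \<Rightarrow> nat) \<Rightarrow> real^('n::{finite,linorder})^('n::{finite,linorder}) \<Rightarrow> nat \<Rightarrow> nat \<Rightarrow> real^('n::{finite,linorder})^('n::{finite,linorder})" where
  "Nm nb M lo hi = (\<chi> r c. if (\<exists>a b. lo \<le> a \<and> a \<le> b \<and> b < hi \<and> in_block nb a r \<and> in_block nb b c)
                                 then M $ r $ c else 0)"

definition Rs :: "(nat \<Rightarrow> nat) \<Rightarrow> nat \<Rightarrow> nat \<Rightarrow> 'n::{finite,linorder} set" where
  "Rs nb lo hi = {r. \<exists>a. lo \<le> a \<and> a < hi \<and> in_block nb a r}"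

lemma Nm_restr: "Nm nb M lo hi = restr (Rs nb lo hi) (Rs nb lo hi) (Nm nb M lo hi)"
  unfolding vec_eq_iff Nm_def restr_def Rs_def by auto

lemma Nm_base:
  assumes "hi \<le> Suc lo"
  shows "Nm nb M lo hi = restr (Rs nb lo hi) (Rs nb lo hi) M"
proof -
  have A: "a = lo" if "lo \<le> a" "a < hi" for a using assms that by auto
  have "(\<exists>a b. lo \<le> a \<and> a \<le> b \<and> b < hi \<and> in_block nb a r \<and> in_block nb b c) \<longleftrightarrow>
        (\<exists>a. lo \<le> a \<and> a < hi \<and> in_block nb a r) \<and> (\<exists>a. lo \<le> a \<and> a < hi \<and> in_block nb a c)" for r c
  proof
    assume "\<exists>a b. lo \<le> a \<and> a \<le> b \<and> b < hi \<and> in_block nb a r \<and> in_block nb b c"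
    then obtain a b where "lo \<le> a" "a \<le> b" "b < hi" "in_block nb a r" "in_block nb b c" by blast
    then show "(\<exists>a. lo \<le> a \<and> a < hi \<and> in_block nb a r) \<and> (\<exists>a. lo \<le> a \<and> a < hi \<and> in_block nb a c)"
      by (meson order.trans le_less_trans)
  next
    assume "(\<exists>a. lo \<le> a \<and> a < hi \<and> in_block nb a r) \<and> (\<exists>a. lo \<le> a \<and> a < hi \<and> in_block nb a c)"
    then obtain a b where "lo \<le> a" "a < hi" "in_block nb a r" "lo \<le> b" "b < hi" "in_block nb b c" by blast
    moreover have "a = lo" "b = lo" using A calculation by auto
    ultimately show "\<exists>a b. lo \<le> a \<and> a \<le> b \<and> b < hi \<and> in_block nb a r \<and> in_block nb b c" by blast
  qed
  note E = this
  have "Nm nb M lo hi $ r $ c = restr (Rs nb lo hi) (Rs nb lo hi) M $ r $ c" for r c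
    unfolding Nm_def restr_def Rs_def by (simp only: vec_lambda_beta mem_Collect_eq E)
  then show ?thesis by (simp add: vec_eq_iff)
qed

lemma Rs_disj:
  assumes bs: "block_structure nb m n" and "hi \<le> m"
  shows "Rs nb lo mid \<inter> Rs nb mid hi = ({} :: 'n::{finite,linorder} set)"
proof (rule equals0I)
  fix r assume "r \<in> Rs nb lo mid \<inter> Rs nb mid hi"
  then obtain a a' where "lo \<le> a" "a < mid" "in_block nb a r" "mid \<le> a'" "a' < hi" "in_block nb a' r"
    unfolding Rs_def by blast
  moreover have "a < m" "a' < m" using calculation assms(2) by linarith+
  ultimately show False using blk_uniq[OF bs] by fastforce
qed

lemma Nm_split:
  assumes bs: "block_structure nb m n" and "hi \<le> m" "lo \<le> mid" "mid \<le> hi"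
  shows "Nm nb M lo hi = Nm nb M lo mid + Nm nb M mid hi + restr (Rs nb lo mid) (Rs nb mid hi) M"
proof -
  have u: "\<And>a a' r. a < hi \<Longrightarrow> a' < hi \<Longrightarrow> in_block nb a r \<Longrightarrow> in_block nb a' r \<Longrightarrow> a = a'"
    using blk_uniq[OF bs] assms(2) by (meson less_le_trans)
  have "(Nm nb M lo hi) $ r $ c = (Nm nb M lo mid + Nm nb M mid hi + restr (Rs nb lo mid) (Rs nb mid hi) M) $ r $ c" for r c
  proof -
    define P where "P = (\<exists>a b. lo \<le> a \<and> a \<le> b \<and> b < hi \<and> in_block nb a r \<and> in_block nb b c)"
    define P1 where "P1 = (\<exists>a b. lo \<le> a \<and> a \<le> b \<and> b < mid \<and> in_block nb a r \<and> in_block nb b c)"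
    define P2 where "P2 = (\<exists>a b. mid \<le> a \<and> a \<le> b \<and> b < hi \<and> in_block nb a r \<and> in_block nb b c)"
    define X where "X = (r \<in> Rs nb lo mid \<and> c \<in> Rs nb mid hi)"
    have e1: "P" if h: "P1 \<or> P2 \<or> X"
    proof -
      consider "P1" | "P2" | "X" using h by blast
      then show ?thesis
      proof cases
        case 1 then obtain a b where "lo \<le> a" "a \<le> b" "b < mid" "in_block nb a r" "in_block nb b c"
          unfolding P1_def by blast
        then show ?thesis unfolding P_def using assms(4) by (meson less_le_trans)
      next
        case 2 then obtain a b where "mid \<le> a" "a \<le> b" "b < hi" "in_block nb a r" "in_block nb b c"
          unfolding P2_def by blast
        then show ?thesis unfolding P_def using assms(3) by (meson order_trans)
      next
        case 3 then obtain a b where "lo \<le> a" "a < mid" "in_block nb a r" "mid \<le> b" "b < hi" "in_block nb b c"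
          unfolding X_def Rs_def by blast
        moreover have "a \<le> b" using calculation by simp
        ultimately show ?thesis unfolding P_def by blast
      qed
    qed
    have e2: "P1 \<or> P2 \<or> X" if "P"
    proof -
      obtain a b where ab: "lo \<le> a" "a \<le> b" "b < hi" "in_block nb a r" "in_block nb b c"
        using \<open>P\<close> unfolding P_def by blast
      show ?thesis
      proof (cases "b < mid")
        case True then show ?thesis unfolding P1_def using ab by blast
      next
        case F1: False
        show ?thesis
        proof (cases "mid \<le> a")
          case True then show ?thesis unfolding P2_def using ab by blast
        next
          case False
          then have "a < mid" "mid \<le> b" using F1 by simp_all
          then show ?thesis unfolding X_def Rs_def using ab by blast
        qed
      qed
    qed
    have ri: "a < mid" if "in_block nb a r" "lo \<le> a" "a < mid" for a using that by simp
    have x1: "\<not> (P1 \<and> P2)"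
    proof
      assume "P1 \<and> P2"
      then obtain a a' where "a < mid" "in_block nb a r" "mid \<le> a'" "a' < hi" "in_block nb a' r"
        unfolding P1_def P2_def by (meson order.strict_trans1)
      moreover have "a < hi" using calculation by linarith
      ultimately show False using u by fastforce
    qed
    have x2: "\<not> (P1 \<and> X)"
    proof
      assume "P1 \<and> X"
      then obtain b b' where "b < mid" "in_block nb b c" "mid \<le> b'" "b' < hi" "in_block nb b' c"
        unfolding P1_def X_def Rs_def by blast
      moreover have "b < hi" using calculation by linarith
      ultimately show False using u by fastforce
    qed
    have x3: "\<not> (P2 \<and> X)"
    proof
      assume h: "P2 \<and> X"
      then obtain a' b where "mid \<le> a'" "a' \<le> b" "b < hi" "in_block nb a' r"
        unfolding P2_def by blast
      moreover obtain a where "a < mid" "in_block nb a r"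
        using h unfolding X_def Rs_def by blast
      moreover have "a' < hi" using calculation by linarith
      moreover have "a < hi" using calculation by linarith
      ultimately show False using u by fastforce
    qed
    have "(Nm nb M lo hi) $ r $ c = (if P then M $ r $ c else 0)" unfolding Nm_def P_def by simp
    moreover have "(Nm nb M lo mid + Nm nb M mid hi + restr (Rs nb lo mid) (Rs nb mid hi) M) $ r $ c
       = (if P1 then M $ r $ c else 0) + (if P2 then M $ r $ c else 0) + (if X then M $ r $ c else 0)"
      unfolding Nm_def restr_def P1_def P2_def X_def by simp
    ultimately show ?thesis using e1 e2 x1 x2 x3 by auto
  qed
  then show ?thesis by (simp add: vec_eq_iff)
qed

lemma Nm_bound:
  assumes bs: "block_structure nb m n"
  shows "hi \<le> m \<Longrightarrow> hi - lo \<le> 2^k \<Longrightarrow> spec_norm (Nm nb M lo hi) \<le> (real k + 1) * spec_norm M"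
proof (induction k arbitrary: lo hi)
  case 0
  then have "hi \<le> Suc lo" by simp
  then show ?case using Nm_base[of hi lo nb M] restr_le by simp
next
  case (Suc k)
  show ?case
  proof (cases "hi \<le> Suc lo")
    case True
    have "spec_norm M \<le> (real (Suc k) + 1) * spec_norm M"
      using spec_norm_nonneg[of M] by (simp add: algebra_simps)
    then show ?thesis using Nm_base[of hi lo nb M] True restr_le[of _ _ M] by (metis order_trans)
  next
    case False
    define mid where "mid = min hi (lo + 2^k)"
    have m1: "lo \<le> mid" "mid \<le> hi" using False by (auto simp: mid_def)
    have l1: "mid - lo \<le> 2^k" "hi - mid \<le> 2^k" using Suc.prems by (auto simp: mid_def)
    have h1: "spec_norm (Nm nb M lo mid) \<le> (real k + 1) * spec_norm M"
      using Suc.IH[of mid lo] l1 m1 Suc.prems by simp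
    have h2: "spec_norm (Nm nb M mid hi) \<le> (real k + 1) * spec_norm M"
      using Suc.IH[of hi mid] l1 m1 Suc.prems by simp
    have "spec_norm (Nm nb M lo hi) \<le> spec_norm (Nm nb M lo mid + Nm nb M mid hi) + spec_norm (restr (Rs nb lo mid) (Rs nb mid hi) M)"
      unfolding Nm_split[OF bs Suc.prems(1) m1] by (rule spec_norm_add)
    also have "spec_norm (Nm nb M lo mid + Nm nb M mid hi) \<le> max (spec_norm (Nm nb M lo mid)) (spec_norm (Nm nb M mid hi))"
    proof -
      have q1: "restr (Rs nb lo mid) (Rs nb lo mid) (Nm nb M lo mid) = Nm nb M lo mid"
        by (rule Nm_restr[symmetric])
      have q2: "restr (Rs nb mid hi) (Rs nb mid hi) (Nm nb M mid hi) = Nm nb M mid hi"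
        by (rule Nm_restr[symmetric])
      show ?thesis
        using pinch[OF Rs_disj[OF bs Suc.prems(1), where lo=lo and mid=mid] Rs_disj[OF bs Suc.prems(1), where lo=lo and mid=mid],
            where A = "Nm nb M lo mid" and B = "Nm nb M mid hi"]
        unfolding q1 q2 .
    qed
    also have "\<dots> \<le> (real k + 1) * spec_norm M" using h1 h2 by simp
    finally show ?thesis using restr_le[of "Rs nb lo mid" "Rs nb mid hi" M] by (simp add: algebra_simps)
  qed
qed

theorem mainTheorem11:
  fixes M :: "real^('n::{finite,linorder})^('n::{finite,linorder})" and nb :: "nat \<Rightarrow> nat" and m :: nat
  assumes "block_structure nb m CARD('n)"
  shows "spec_norm (block_upper nb m M) \<le> (real_of_int \<lceil>log 2 (real m)\<rceil> + 1) * spec_norm M"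
proof -
  have bs: "block_structure nb m CARD('n)" by fact
  have m1: "1 \<le> m"
  proof (rule ccontr)
    assume "\<not> 1 \<le> m"
    then have "m = 0" by simp
    then have "CARD('n) = 0" using bs unfolding block_structure_def by force
    then show False by simp
  qed
  have bu: "block_upper nb m M = Nm nb M 0 m"
    unfolding block_upper_def Nm_def by simp
  define k where "k = nat \<lceil>log 2 (real m)\<rceil>"
  have lg: "0 \<le> log 2 (real m)" using m1 by simp
  have kk: "real k = real_of_int \<lceil>log 2 (real m)\<rceil>" unfolding k_def using lg by simp
  have "real m = 2 powr (log 2 (real m))" using m1 by simp
  also have "\<dots> \<le> 2 powr (real k)"
    unfolding kk by (rule powr_mono) auto
  also have "\<dots> = 2 ^ k" by (simp add: powr_realpow)
  finally have "real m \<le> real (2 ^ k)" by simp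
  then have "m - 0 \<le> 2 ^ k" by (simp only: of_nat_le_iff)
  from Nm_bound[OF bs order.refl this, of M] show ?thesis
    unfolding bu kk .
qed

end
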